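(* Let $N\ge2$ and ${\bm{p}}\in\Delta_K$ with $p_1\ge p_2\ge\dots\ge p_K>0$. Let ${\bm{q}}^*(N)$ be the minimizer over ${\bm{q}}\in\Delta_K$ of $\sum_kp_k(1-q_k)^N$, let $\beta_N>0$ be such that $q_k^*(N)=\max\{0,1-\beta_Np_k^{-1/(N-1)}\}$ for all $k$, and let $K_N:=\max\{k\in[K]:q_k^*(N)\neq0\}$. Then $$\beta_N=\frac{K_N-1}{\sum_{k=1}^{K_N}p_k^{-1/(N-1)}}\in\left[p_{K_N+1}^{1/(N-1)},\,p_{K_N}^{1/(N-1)}\right),$$ $$K_N=\max\{l\mid f_N(l)<1\},\quad\text{where } f_N(l):=\sum_{k=1}^{l-1}\left(1-\left(\frac{p_l}{p_k}\right)^{1/(N-1)}\right),$$ with the convention $p_{K+1}=0$.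
   Context: $\Delta_K=\{{\bm{r}}\in\mathbb{R}^K:{\bm{r}}\ge0,\ \sum_kr_k=1\}$. The objective is the expected test loss of the memorization model. *)

theory Defs
  imports Complex_Main
begin

definition simplex :: "nat \<Rightarrow> (nat \<Rightarrow> real) set" where
  "simplex K = {r. (\<forall>k\<in>{1..K}. r k \<ge> 0) \<and> (\<Sum>k=1..K. r k) = 1}"

definition mem_loss :: "nat \<Rightarrow> nat \<Rightarrow> (nat \<Rightarrow> real) \<Rightarrow> (nat \<Rightarrow> real) \<Rightarrow> real" where
  "mem_loss K N p q = (\<Sum>k=1..K. p k * (1 - q k) ^ N)"

definition pext :: "nat \<Rightarrow> (nat \<Rightarrow> real) \<Rightarrow> nat \<Rightarrow> real" where
  "pext K p k = (if k \<le> K then p k else 0)"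

definition fN :: "nat \<Rightarrow> (nat \<Rightarrow> real) \<Rightarrow> nat \<Rightarrow> real" where
  "fN N p l = (\<Sum>k=1..l-1. 1 - (p l / p k) powr (1 / (real N - 1)))"

end

theory Submission
  imports Defs
begin

theorem lemmaA7:
  fixes K N :: nat and p q :: "nat \<Rightarrow> real" and \<beta> :: real and KN :: nat
  assumes N2: "N \<ge> 2"
    and p_simplex: "p \<in> simplex K"
    and p_mono: "\<And>i j. 1 \<le> i \<Longrightarrow> i \<le> j \<Longrightarrow> j \<le> K \<Longrightarrow> p j \<le> p i"
    and p_pos: "\<And>k. k \<in> {1..K} \<Longrightarrow> p k > 0"
    and q_simplex: "q \<in> simplex K"
    and q_min: "\<And>q'. q' \<in> simplex K \<Longrightarrow> mem_loss K N p q \<le> mem_loss K N p q'"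
    and beta_pos: "\<beta> > 0"
    and q_form: "\<And>k. k \<in> {1..K} \<Longrightarrow>
                   q k = max 0 (1 - \<beta> * p k powr (- 1 / (real N - 1)))"
    and KN_def: "KN = Max {k \<in> {1..K}. q k \<noteq> 0}"
  shows "\<beta> = (real KN - 1) / (\<Sum>k=1..KN. p k powr (- 1 / (real N - 1)))
         \<and> pext K p (KN + 1) powr (1 / (real N - 1)) \<le> \<beta>
         \<and> \<beta> < p KN powr (1 / (real N - 1))
         \<and> KN = Max {l \<in> {1..K}. fN N p l < 1}"
proof -
  define a where "a = 1 / (real N - 1)"
  define s where "s k = p k powr a" for k
  have a_pos: "a > 0" using N2 by (simp add: a_def)
  have s_pos: "s k > 0" if "k \<in> {1..K}" for k using p_pos[OF that] by (simp add: s_def)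
  have r_eq: "p k powr (- 1 / (real N - 1)) = 1 / s k" for k
    by (simp add: s_def a_def powr_minus_divide)
  have s_mono: "s j \<le> s i" if "1 \<le> i" "i \<le> j" "j \<le> K" for i j
    unfolding s_def using p_mono[OF that] p_pos[of j] that a_pos
    by (intro powr_mono2) auto
  have qf: "q k = max 0 (1 - \<beta> / s k)" if "k \<in> {1..K}" for k
    using q_form[OF that] r_eq by simp
  have qnz: "q k \<noteq> 0 \<longleftrightarrow> \<beta> < s k" if "k \<in> {1..K}" for k
  proof -
    have e: "\<beta> / s k < 1 \<longleftrightarrow> \<beta> < s k" using s_pos[OF that] by (rule divide_less_eq_1_pos)
    have m: "max 0 x \<noteq> 0 \<longleftrightarrow> x > 0" for x :: real by (auto simp: max_def)
    have e2: "1 - \<beta> / s k > 0 \<longleftrightarrow> \<beta> / s k < 1" by linarith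
    show ?thesis unfolding qf[OF that] m e2 e ..
  qed
  have qsum: "(\<Sum>k=1..K. q k) = 1" using q_simplex by (simp add: simplex_def)
  define S where "S = {k \<in> {1..K}. q k \<noteq> 0}"
  have finS: "finite S" by (simp add: S_def)
  have neS: "S \<noteq> {}"
  proof
    assume "S = {}"
    then have "\<forall>k\<in>{1..K}. q k = 0" by (auto simp: S_def)
    then have "(\<Sum>k=1..K. q k) = 0" by simp
    with qsum show False by simp
  qed
  have KNS: "KN \<in> S" unfolding KN_def S_def[symmetric] using finS neS by (rule Max_in)
  have KN1: "1 \<le> KN" and KNK: "KN \<le> K" using KNS by (auto simp: S_def)
  have big: "s k \<le> \<beta>" if "KN < k" "k \<le> K" for k
  proof -
    have "k \<notin> S"
    proof
      assume "k \<in> S"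
      then have "k \<le> KN" unfolding KN_def S_def[symmetric] by (rule Max_ge[OF finS])
      with that show False by simp
    qed
    then have "q k = 0" using that KN1 unfolding S_def by simp
    moreover have "k \<in> {1..K}" using that KN1 by simp
    ultimately have "\<not> \<beta> < s k" using qnz[of k] by simp
    then show ?thesis by linarith
  qed
  have small: "\<beta> < s k" if "1 \<le> k" "k \<le> KN" for k
  proof -
    have "KN \<in> {1..K}" "q KN \<noteq> 0" using KNS unfolding S_def by simp_all
    then have "\<beta> < s KN" using qnz[of KN] by simp
    moreover have "s KN \<le> s k" using s_mono[of k KN] that KNK by simp
    ultimately show ?thesis by simp
  qed
  have qsmall: "q k = 1 - \<beta> / s k" if "1 \<le> k" "k \<le> KN" for k
  proof -
    have k: "k \<in> {1..K}" using that KNK by simp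
    have "\<beta> / s k < 1" using small[OF that] s_pos[OF k] divide_less_eq_1_pos by blast
    then have "1 - \<beta> / s k > 0" by linarith
    then show ?thesis unfolding qf[OF k] by (simp add: max_def)
  qed
  have qbig: "q k = 0" if "KN < k" "k \<le> K" for k
  proof -
    have k: "k \<in> {1..K}" using that KN1 by simp
    show ?thesis using qnz[OF k] big[OF that] by simp
  qed
  have split: "{1..K} = {1..KN} \<union> {KN+1..K}" using KN1 KNK by auto
  have "(\<Sum>k=1..K. q k) = (\<Sum>k=1..KN. q k) + (\<Sum>k=KN+1..K. q k)"
    unfolding split by (rule sum.union_disjoint) auto
  also have "(\<Sum>k=KN+1..K. q k) = 0" using qbig by simp
  finally have "(\<Sum>k=1..K. q k) = (\<Sum>k=1..KN. q k)" by simp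
  also have "(\<Sum>k=1..KN. q k) = (\<Sum>k=1..KN. 1 - \<beta> / s k)"
    using qsmall by simp
  also have "\<dots> = real KN - \<beta> * (\<Sum>k=1..KN. 1 / s k)"
    by (simp add: sum_subtractf sum_distrib_left)
  finally have eq1: "real KN - \<beta> * (\<Sum>k=1..KN. 1 / s k) = 1" using qsum by simp
  have Spos: "(\<Sum>k=1..KN. 1 / s k) > 0"
    using KN1 KNK s_pos by (intro sum_pos) auto
  have part1: "\<beta> = (real KN - 1) / (\<Sum>k=1..KN. p k powr (- 1 / (real N - 1)))"
    using eq1 Spos unfolding r_eq by (simp add: field_simps)
  have part2: "pext K p (KN + 1) powr (1 / (real N - 1)) \<le> \<beta>"
  proof (cases "KN + 1 \<le> K")
    case True
    then show ?thesis using big[of "KN+1"] by (simp add: pext_def s_def a_def)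
  next
    case False
    then show ?thesis using beta_pos by (simp add: pext_def)
  qed
  have part3: "\<beta> < p KN powr (1 / (real N - 1))"
    using small[of KN] KN1 by (simp add: s_def a_def)
  have fN_eq: "fN N p l = (\<Sum>k=1..l-1. 1 - s l / s k)" if "l \<in> {1..K}" for l
    unfolding fN_def a_def[symmetric] s_def
    using that p_pos by (intro sum.cong refl) (auto simp: powr_divide less_imp_le)
  have setEq: "{l \<in> {1..K}. fN N p l < 1} = {1..KN}"
  proof (intro set_eqI iffI)
    fix l assume "l \<in> {1..KN}"
    then have l: "1 \<le> l" "l \<le> KN" by auto
    have "(\<Sum>k=1..l-1. 1 - s l / s k) < 1"
    proof (cases "l = 1")
      case True then show ?thesis by simp
    next
      case False
      have "(\<Sum>k=1..l-1. 1 - s l / s k) < (\<Sum>k=1..l-1. 1 - \<beta> / s k)"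
      proof (rule sum_strict_mono)
        fix k assume k: "k \<in> {1..l-1}"
        have "\<beta> < s l" using small l by auto
        moreover have "s k > 0" using s_pos k l KNK by auto
        ultimately show "1 - s l / s k < 1 - \<beta> / s k" by (simp add: divide_strict_right_mono)
      qed (use False l in auto)
      also have "\<dots> \<le> (\<Sum>k=1..KN. 1 - \<beta> / s k)"
      proof (rule sum_mono2)
        fix k assume "k \<in> {1..KN} - {1..l-1}"
        then have "1 \<le> k" "k \<le> KN" by auto
        then show "0 \<le> 1 - \<beta> / s k" using small[of k] s_pos[of k] KNK by (simp add: field_simps)
      qed (use l in auto)
      also have "\<dots> = 1" using eq1 by (simp add: sum_subtractf sum_distrib_left)
      finally show ?thesis .
    qed
    then show "l \<in> {l \<in> {1..K}. fN N p l < 1}" using fN_eq[of l] l KNK by auto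
  next
    fix l assume "l \<in> {l \<in> {1..K}. fN N p l < 1}"
    then have l: "1 \<le> l" "l \<le> K" and f: "fN N p l < 1" by auto
    show "l \<in> {1..KN}"
    proof (rule ccontr)
      assume "l \<notin> {1..KN}"
      then have lK: "KN < l" using l by auto
      have "1 = (\<Sum>k=1..KN. 1 - \<beta> / s k)" using eq1 by (simp add: sum_subtractf sum_distrib_left)
      also have "\<dots> \<le> (\<Sum>k=1..KN. 1 - s l / s k)"
      proof (rule sum_mono)
        fix k assume "k \<in> {1..KN}"
        then have "s k > 0" using s_pos KNK by auto
        then show "1 - \<beta> / s k \<le> 1 - s l / s k" using big[OF lK l(2)] by (simp add: divide_right_mono)
      qed
      also have "\<dots> \<le> (\<Sum>k=1..l-1. 1 - s l / s k)"
      proof (rule sum_mono2)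
        fix k assume "k \<in> {1..l-1} - {1..KN}"
        then have "1 \<le> k" "k \<le> l" by auto
        then show "0 \<le> 1 - s l / s k" using s_mono[of k l] s_pos[of k] l by (simp add: field_simps)
      qed (use lK in auto)
      also have "\<dots> = fN N p l" using fN_eq[of l] l by simp
      finally show False using f by simp
    qed
  qed
  have part4: "KN = Max {l \<in> {1..K}. fN N p l < 1}"
    unfolding setEq using KN1 by (intro Max_eqI[symmetric]) auto
  show ?thesis using part1 part2 part3 part4 by blast
qed

end
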